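(* Let $\pi$ be a (not necessarily unique) QSD of $(X_t)_{0\le t<\tau_\partial}$, $\lambda=\lambda(\pi)$, and assume the reverse anti-Dobrushin condition (RaD) holds with time $t_2>0$ and constant $C_2'<\infty$. Set $C_2:=\lambda^{t_2}C_2'$. Then $$P_{t_2}(x,\cdot)\le C_2\,\pi(\cdot)\quad\text{for every }x\in\chi .$$
   Context: $\chi$ is a metric space with Borel $\sigma$-algebra; $\partial\notin\chi$ is a cemetery point. $(X_t)_{0\le t<\tau_\partial}$ is a killed Markov process on $\chi$ in discrete or continuous time, absorption time $\tau_\partial=\inf\{t\ge0:X_t=\partial\}$, submarkovian semigroup $P_t(x,A)=\mathbb P_x(X_t\in A,\tau_\partial>t)$; $K1(x)=K(x,\chi)$ for a kernel $K$. A QSD is a probability measure $\pi$ with $\mathbb P_\pi(X_t\in\cdot\mid\tau_\partial>t)=\pi$ for all $t$; $\lambda(\pi):=\mathbb P_\pi(\tau_\partial>1)$. A submarkovian kernel $K$ is lower semicontinuous if $Kf$ is lower semicontinuous for every bounded continuous $f\ge0$. $\mathrm{spt}(\pi)$ denotes the support. Reverse anti-Dobrushin condition (RaD): there exist a time $t_2>0$ and a submarkovian kernel $R^{(2)}$ with $\pi(dx)P_{t_2}(x,dy)=\pi(dy)R^{(2)}(y,dx)$ as measures on $\chi\times\chi$, and $C_2'<\infty$ with $R^{(2)}(y,\cdot)/R^{(2)}1(y)\le C_2'\pi(\cdot)$ for $\pi$-a.e. $y$; moreover $\mathrm{spt}(\pi)=\chi$ and $P_{t_2}$ is lower semicontinuous.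 *)

theory Defs
  imports "HOL-Analysis.Analysis" "HOL-Probability.Probability"
begin

definition lsc_fun :: "('a::topological_space \<Rightarrow> real) \<Rightarrow> bool" where
  "lsc_fun g \<longleftrightarrow> (\<forall>c. open {x. c < g x})"

definition lsc_kernel :: "('a::topological_space \<Rightarrow> 'a measure) \<Rightarrow> bool" where
  "lsc_kernel K \<longleftrightarrow>
     (\<forall>f::'a \<Rightarrow> real. continuous_on UNIV f \<longrightarrow> bounded (range f) \<longrightarrow> (\<forall>x. 0 \<le> f x) \<longrightarrow>
        lsc_fun (\<lambda>x. \<integral>y. f y \<partial>(K x)))"

definition spt :: "'a::topological_space measure \<Rightarrow> 'a set" where
  "spt \<mu> = {x. \<forall>U. open U \<longrightarrow> x \<in> U \<longrightarrow> 0 < emeasure \<mu> U}"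

definition joint :: "'a::topological_space measure \<Rightarrow> ('a \<Rightarrow> 'a measure) \<Rightarrow> ('a \<times> 'a) measure" where
  "joint \<mu> K = \<mu> \<bind> (\<lambda>x. distr (K x) (borel \<Otimes>\<^sub>M borel) (\<lambda>y. (x, y)))"

text \<open>Submarkovian semigroup (P_t) indexed by the time set T (T = \<nat> or T = [0,\<infinity>)).\<close>
definition submarkov_semigroup :: "real set \<Rightarrow> (real \<Rightarrow> 'a::topological_space \<Rightarrow> 'a measure) \<Rightarrow> bool" where
  "submarkov_semigroup T P \<longleftrightarrow>
     (\<forall>t\<in>T. P t \<in> borel \<rightarrow>\<^sub>M subprob_algebra borel) \<and>
     (\<forall>x. P 0 x = return borel x) \<and>
     (\<forall>s\<in>T. \<forall>t\<in>T. \<forall>x. P (s + t) x = P s x \<bind> P t)"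

text \<open>Quasi-stationary distribution: P_\<pi>(X_t \<in> A | \<tau> > t) = \<pi>(A); the conditioning
  requires P_\<pi>(\<tau> > t) > 0.\<close>
definition is_QSD :: "real set \<Rightarrow> (real \<Rightarrow> 'a::topological_space \<Rightarrow> 'a measure) \<Rightarrow> 'a measure \<Rightarrow> bool" where
  "is_QSD T P \<pi> \<longleftrightarrow> prob_space \<pi> \<and> sets \<pi> = sets borel \<and>
     (\<forall>t\<in>T. 0 < (\<integral>x. measure (P t x) UNIV \<partial>\<pi>) \<and>
        (\<forall>A\<in>sets borel. (\<integral>x. measure (P t x) A \<partial>\<pi>) / (\<integral>x. measure (P t x) UNIV \<partial>\<pi>) = measure \<pi> A))"

definition lambda_QSD :: "(real \<Rightarrow> 'a::topological_space \<Rightarrow> 'a measure) \<Rightarrow> 'a measure \<Rightarrow> real" where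
  "lambda_QSD P \<pi> = (\<integral>x. measure (P 1 x) UNIV \<partial>\<pi>)"

end

theory Submission
  imports Defs
begin

lemma closed_apx:
  fixes M :: "'a::metric_space measure"
  assumes fm: "finite_measure M" and sb: "sets M = sets borel" and F: "closed F" and e: "e > 0"
  shows "\<exists>U. open U \<and> F \<subseteq> U \<and> measure M (U - F) < e"
proof -
  interpret finite_measure M by fact
  define U where "U n = (\<Union>y\<in>F. ball y (1 / Suc n))" for n :: nat
  have oU: "open (U n)" for n unfolding U_def by auto
  have FU: "F \<subseteq> U n" for n unfolding U_def by force
  have dec: "decseq U" unfolding U_def decseq_def
  proof (intro allI impI)
    fix m n :: nat assume "m \<le> n"
    then have "1 / real (Suc n) \<le> 1 / Suc m" by (simp add: frac_le)
    then show "(\<Union>y\<in>F. ball y (1 / Suc n)) \<subseteq> (\<Union>y\<in>F. ball y (1 / Suc m))" by fastforce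
  qed
  have int: "(\<Inter>i. U i) = F"
  proof
    show "(\<Inter>i. U i) \<subseteq> F"
    proof
      fix x assume x: "x \<in> (\<Inter>i. U i)"
      have "x \<in> closure F"
        unfolding closure_approachable
      proof (intro allI impI)
        fix d :: real assume "d > 0"
        then obtain n where n: "1 / Suc n < d" using nat_approx_posE by blast
        from x have "x \<in> U n" by auto
        then obtain y where "y \<in> F" "dist y x < 1 / Suc n" unfolding U_def by (auto simp: dist_commute)
        then show "\<exists>y\<in>F. dist y x < d" using n by (meson less_trans)
      qed
      then show "x \<in> F" using F closure_closed by auto
    qed
  qed (use FU in auto)
  have sU: "range U \<subseteq> sets M" using oU sb by auto
  have "(\<lambda>n. measure M (U n)) \<longlonglongrightarrow> measure M F"
    using finite_Lim_measure_decseq[OF sU dec] int by simp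
  then have "eventually (\<lambda>n. measure M (U n) < measure M F + e) sequentially"
    using e by (intro order_tendstoD) auto
  then obtain n where n: "measure M (U n) < measure M F + e" by (auto simp: eventually_sequentially)
  have "measure M (U n - F) = measure M (U n) - measure M F"
    using F oU sb FU by (intro finite_measure_Diff) auto
  then show ?thesis using n oU FU by (intro exI[of _ "U n"]) auto
qed

lemma borel_apx:
  fixes M :: "'a::metric_space measure"
  assumes fm: "finite_measure M" and sb: "sets M = sets borel" and A: "A \<in> sets borel"
  shows "(\<forall>e>0. \<exists>U. open U \<and> A \<subseteq> U \<and> measure M (U - A) < e) \<and>
         (\<forall>e>0. \<exists>U. open U \<and> UNIV - A \<subseteq> U \<and> measure M (U - (UNIV - A)) < e)"
  using A[unfolded sets_borel]
proof (induction rule: sigma_sets.induct)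
  case (Basic a)
  then have oa: "open a" by auto
  show ?case
  proof (intro conjI allI impI)
    fix e :: real assume "e > 0"
    then show "\<exists>U. open U \<and> a \<subseteq> U \<and> measure M (U - a) < e" using oa by (intro exI[of _ a]) auto
  next
    fix e :: real assume "e > 0"
    then show "\<exists>U. open U \<and> UNIV - a \<subseteq> U \<and> measure M (U - (UNIV - a)) < e"
      using closed_apx[OF fm sb _ \<open>e > 0\<close>, of "UNIV - a"] oa by (auto simp: closed_def Compl_eq_Diff_UNIV)
  qed
next
  case Empty
  show ?case
  proof (intro conjI allI impI)
    fix e :: real assume "e > 0"
    then show "\<exists>U. open U \<and> {} \<subseteq> U \<and> measure M (U - {}) < e" by (intro exI[of _ "{}"]) auto
  next
    fix e :: real assume "e > 0"
    then show "\<exists>U. open U \<and> UNIV - {} \<subseteq> U \<and> measure M (U - (UNIV - {})) < e" by (intro exI[of _ UNIV]) auto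
  qed
next
  case (Compl a)
  have "UNIV - (UNIV - a) = a" by auto
  then show ?case using Compl.IH by auto
next
  case (Union a)
  interpret finite_measure M by fact
  have sa: "a i \<in> sets M" for i using Union.hyps sb sets_borel by auto
  show ?case
  proof (intro conjI allI impI)
    fix e :: real assume e: "e > 0"
    have "\<exists>U. open U \<and> a i \<subseteq> U \<and> measure M (U - a i) < e / 2 * (1/2)^Suc i" for i
    proof -
      have "e / 2 * (1/2)^Suc i > 0" using e by simp
      then show ?thesis using Union.IH[of i] by blast
    qed
    then obtain U where U: "\<And>i. open (U i)" "\<And>i. a i \<subseteq> U i" "\<And>i. measure M (U i - a i) < e / 2 * (1/2)^Suc i"
      by metis
    have sU: "U i - a i \<in> sets M" for i using U(1) sa sb by auto
    have geo: "(\<lambda>i. e / 2 * (1/2)^Suc i) sums (e / 2)"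
      using sums_mult[OF geometric_sums[of "1/2::real"], of "e/4"] by (simp add: power_Suc)
    have sm: "summable (\<lambda>i. measure M (U i - a i))"
      by (rule summable_comparison_test[OF _ sums_summable[OF geo]]) (use U(3) in \<open>auto intro!: exI[of _ 0] less_imp_le\<close>)
    have "measure M ((\<Union>i. U i) - (\<Union>i. a i)) \<le> measure M (\<Union>i. U i - a i)"
      using sU by (intro finite_measure_mono) auto
    also have "\<dots> \<le> (\<Sum>i. measure M (U i - a i))"
      using sU sm by (intro finite_measure_subadditive_countably) auto
    also have "\<dots> \<le> (\<Sum>i. e / 2 * (1/2)^Suc i)"
      using sm sums_summable[OF geo] U(3) by (intro suminf_le) (auto intro: less_imp_le)
    also have "\<dots> = e / 2" using geo sums_unique by metis
    finally show "\<exists>U. open U \<and> \<Union> (range a) \<subseteq> U \<and> measure M (U - \<Union> (range a)) < e"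
      using e U by (intro exI[of _ "\<Union>i. U i"]) auto
  next
    fix e :: real assume e: "e > 0"
    have "\<exists>V. open V \<and> UNIV - a i \<subseteq> V \<and> measure M (V - (UNIV - a i)) < e / 4 * (1/2)^i" for i
    proof -
      have "e / 4 * (1/2)^i > 0" using e by simp
      then show ?thesis using Union.IH[of i] by blast
    qed
    then obtain V where V: "\<And>i. open (V i)" "\<And>i. UNIV - a i \<subseteq> V i"
        "\<And>i. measure M (V i - (UNIV - a i)) < e / 4 * (1/2)^i"
      by metis
    define B where "B n = (\<Union>i<n. a i)" for n
    have sB: "range B \<subseteq> sets M" unfolding B_def using sa by auto
    have incB: "incseq B" unfolding B_def incseq_def by (auto intro: less_le_trans)
    have UB: "(\<Union>n. B n) = (\<Union>i. a i)" unfolding B_def by auto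
    have "(\<lambda>n. measure M (B n)) \<longlonglongrightarrow> measure M (\<Union>i. a i)"
      using finite_Lim_measure_incseq[OF sB incB] UB by simp
    then have "eventually (\<lambda>n. measure M (\<Union>i. a i) - e / 2 < measure M (B n)) sequentially"
      using e by (intro order_tendstoD) auto
    then obtain N where N: "measure M (\<Union>i. a i) - e / 2 < measure M (B N)"
      by (auto simp: eventually_sequentially)
    have sUa: "(\<Union>i. a i) \<in> sets M" using sa by auto
    have BN: "measure M ((\<Union>i. a i) - B N) < e / 2"
    proof -
      have "B N \<subseteq> (\<Union>i. a i)" "B N \<in> sets M" using sB unfolding B_def by auto
      then have "measure M ((\<Union>i. a i) - B N) = measure M (\<Union>i. a i) - measure M (B N)"
        using finite_measure_Diff[OF sUa] by blast
      then show ?thesis using N by linarith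
    qed
    define W where "W = (\<Inter>i<N. V i)"
    have oW: "open W" unfolding W_def using V(1) by auto
    have sub1: "UNIV - (\<Union>i. a i) \<subseteq> W" unfolding W_def using V(2) by auto
    have sub2: "W - (UNIV - (\<Union>i. a i)) \<subseteq> ((\<Union>i. a i) - B N) \<union> (\<Union>i<N. V i - (UNIV - a i))"
      unfolding W_def B_def by auto
    have sV: "V i - (UNIV - a i) \<in> sets M" for i using V(1) sa sb by auto
    have "measure M (W - (UNIV - (\<Union>i. a i))) \<le> measure M (((\<Union>i. a i) - B N) \<union> (\<Union>i<N. V i - (UNIV - a i)))"
      using sub2 sV sUa sB by (intro finite_measure_mono) auto
    also have "\<dots> \<le> measure M ((\<Union>i. a i) - B N) + measure M (\<Union>i<N. V i - (UNIV - a i))"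
      using sV sUa sB by (intro measure_subadditive) (auto simp: emeasure_eq_measure)
    also have "measure M (\<Union>i<N. V i - (UNIV - a i)) \<le> (\<Sum>i<N. measure M (V i - (UNIV - a i)))"
      using sV by (intro finite_measure_subadditive_finite) auto
    also have "\<dots> \<le> (\<Sum>i<N. e / 4 * (1/2)^i)"
      using V(3) by (intro sum_mono less_imp_le) auto
    also have "\<dots> = e / 4 * (\<Sum>i<N. (1/2::real)^i)" by (simp add: sum_distrib_left)
    also have "\<dots> \<le> e / 2"
    proof -
      have "(\<Sum>i<N. (1/2::real)^i) = 2 * (1 - (1/2)^N)"
        using geometric_sum[of "1/2::real" N] by simp
      also have "\<dots> \<le> 2" by simp
      finally show ?thesis using e by simp
    qed
    finally show "\<exists>U. open U \<and> UNIV - \<Union> (range a) \<subseteq> U \<and> measure M (U - (UNIV - \<Union> (range a))) < e"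
      using BN oW sub1 by (intro exI[of _ W]) auto
  qed
qed

lemma outer_reg:
  fixes M :: "'a::metric_space measure"
  assumes fm: "finite_measure M" and sb: "sets M = sets borel" and A: "A \<in> sets borel" and e: "e > 0"
  shows "\<exists>U. open U \<and> A \<subseteq> U \<and> measure M U \<le> measure M A + e"
proof -
  interpret finite_measure M by fact
  obtain U where U: "open U" "A \<subseteq> U" "measure M (U - A) < e"
    using borel_apx[OF fm sb A] e by auto
  have "measure M (U - A) = measure M U - measure M A"
    using U A sb by (intro finite_measure_Diff) auto
  then show ?thesis using U by (intro exI[of _ U]) auto
qed

lemma mult_fun_powr:
  fixes a :: "real \<Rightarrow> real"
  assumes pos: "\<And>t. t \<ge> 0 \<Longrightarrow> 0 < a t" and le1: "\<And>t. t \<ge> 0 \<Longrightarrow> a t \<le> 1"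
    and mult: "\<And>s t. s \<ge> 0 \<Longrightarrow> t \<ge> 0 \<Longrightarrow> a (s + t) = a s * a t" and t: "t \<ge> 0"
  shows "a t = a 1 powr t"
proof -
  define b where "b x = ln (a x)" for x
  have add: "b (s + t) = b s + b t" if "s \<ge> 0" "t \<ge> 0" for s t
    using mult[OF that] pos[OF that(1)] pos[OF that(2)] unfolding b_def by (simp add: ln_mult)
  have nonpos: "b x \<le> 0" if "x \<ge> 0" for x
    using pos[OF that] le1[OF that] unfolding b_def by simp
  have anti: "b y \<le> b x" if "0 \<le> x" "x \<le> y" for x y
  proof -
    have "b y = b x + b (y - x)" using add[of x "y - x"] that by simp
    then show ?thesis using nonpos[of "y - x"] that by simp
  qed
  have nmul: "b (real n * x) = real n * b x" if "x \<ge> 0" for n x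
  proof (induction n)
    case 0
    have "b 0 = b 0 + b 0" using add[of 0 0] by simp
    then show ?case by simp
  next
    case (Suc n)
    have "b (real (Suc n) * x) = b (real n * x + x)" by (simp add: algebra_simps)
    also have "\<dots> = b (real n * x) + b x" using that by (intro add) auto
    finally show ?case using Suc by (simp add: algebra_simps)
  qed
  have frac: "b (real k / real n) = real k / real n * b 1" if "n > 0" for k n
  proof -
    have "b 1 = b (real n * (1 / real n))" using that by simp
    also have "\<dots> = real n * b (1 / real n)" by (intro nmul) auto
    finally have b1n: "b (1 / real n) = b 1 / real n" using that by (simp add: field_simps)
    have "b (real k / real n) = b (real k * (1 / real n))" by simp
    also have "\<dots> = real k * b (1 / real n)" by (intro nmul) auto
    finally show ?thesis using b1n by simp
  qed
  have b1: "b 1 \<le> 0" using nonpos by simp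
  have bound: "\<bar>b t - t * b 1\<bar> \<le> - b 1 / real n" if n: "n > 0" for n :: nat
  proof -
    define k where "k = nat \<lfloor>real n * t\<rfloor>"
    have kle: "real k \<le> real n * t" unfolding k_def using t by simp
    have kge: "real n * t < real k + 1" unfolding k_def using t by linarith
    have nn: "real n > 0" using n by simp
    have l1: "real k / real n \<le> t" using kle nn by (simp add: pos_divide_le_eq mult.commute)
    have l2: "t \<le> (real k + 1) / real n" using kge nn by (simp add: pos_le_divide_eq mult.commute)
    have l3: "t - 1 / real n \<le> real k / real n"
    proof -
      have "t - 1 / real n = (real n * t - 1) / real n" using nn by (simp add: diff_divide_distrib)
      also have "\<dots> \<le> real k / real n" using kge nn by (intro divide_right_mono) auto
      finally show ?thesis .
    qed
    have up: "b t \<le> real k / real n * b 1"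
      using anti[of "real k / real n" t] l1 frac[OF n, of k] by simp
    have lo: "real (k + 1) / real n * b 1 \<le> b t"
      using anti[of t "real (k + 1) / real n"] l2 frac[OF n, of "k + 1"] t by (simp add: add.commute)
    have "real k / real n * b 1 \<le> (t - 1 / real n) * b 1"
      using l3 b1 by (intro mult_right_mono_neg) auto
    moreover have "(t + 1 / real n) * b 1 \<le> real (k + 1) / real n * b 1"
    proof -
      have "real (k + 1) / real n \<le> t + 1 / real n" using l1 nn by (simp add: add_divide_distrib)
      then show ?thesis using b1 by (intro mult_right_mono_neg) auto
    qed
    ultimately show ?thesis using up lo by (simp add: algebra_simps abs_le_iff)
  qed
  have "b t = t * b 1"
  proof (rule ccontr)
    assume ne: "b t \<noteq> t * b 1"
    then have d: "\<bar>b t - t * b 1\<bar> > 0" by simp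
    have "b 1 \<noteq> 0"
    proof
      assume "b 1 = 0"
      then show False using bound[of 1] d by simp
    qed
    then have nb: "- b 1 > 0" using b1 by simp
    obtain n :: nat where n: "- b 1 / \<bar>b t - t * b 1\<bar> < real n"
      using reals_Archimedean2 by blast
    then have "n > 0" using nb d
      by (metis divide_pos_pos not_gr0 of_nat_0 order_less_asym)
    then have "- b 1 / real n < \<bar>b t - t * b 1\<bar>" using n d nb
      by (simp add: field_simps)
    then show False using bound[OF \<open>n > 0\<close>] by simp
  qed
  then show ?thesis using pos[OF t] pos[of 1] unfolding b_def powr_def
    by (metis exp_ln mult.commute less_irrefl zero_le_one)
qed

lemma open_from_cont:
  fixes \<mu> \<nu> :: "'a::metric_space measure"
  assumes fm: "finite_measure \<mu>" "finite_measure \<nu>" and sb: "sets \<mu> = sets borel" "sets \<nu> = sets borel"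
   and H: "\<And>f::'a\<Rightarrow>real. continuous_on UNIV f \<Longrightarrow> bounded (range f) \<Longrightarrow> (\<forall>x. 0 \<le> f x) \<Longrightarrow>
            (\<integral>y. f y \<partial>\<mu>) \<le> c * (\<integral>y. f y \<partial>\<nu>)"
   and U: "open U"
  shows "measure \<mu> U \<le> c * measure \<nu> U"
proof (cases "U = UNIV")
  case True
  have "(\<integral>y. (1::real) \<partial>\<mu>) \<le> c * (\<integral>y. 1 \<partial>\<nu>)" by (rule H) auto
  moreover have "space \<mu> = UNIV" "space \<nu> = UNIV" using sb by (auto dest: sets_eq_imp_space_eq)
  ultimately show ?thesis using True by simp
next
  case False
  define f where "f n y = min 1 (real n * infdist y (- U))" for n :: nat and y
  have cf: "continuous_on UNIV (f n)" for n unfolding f_def by (intro continuous_intros)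
  have f01: "0 \<le> f n y" "f n y \<le> 1" for n y unfolding f_def by (auto simp: infdist_nonneg)
  have bf: "bounded (range (f n))" for n
    using f01 by (intro boundedI[of _ 1]) auto
  have cl: "closed (- U)" "- U \<noteq> {}" using U False by auto
  have lim: "(\<lambda>n. f n y) \<longlonglongrightarrow> indicator U y" for y
  proof (cases "y \<in> U")
    case True
    then have d: "infdist y (- U) > 0"
      using in_closed_iff_infdist_zero[OF cl, of y] infdist_nonneg[of y "- U"] by auto
    obtain N :: nat where N: "1 / infdist y (- U) < real N" using reals_Archimedean2 by blast
    have "f n y = 1" if "n \<ge> N" for n
    proof -
      have "1 < real N * infdist y (- U)" using N d by (simp add: field_simps)
      also have "\<dots> \<le> real n * infdist y (- U)" using that d by (intro mult_right_mono) auto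
      finally show ?thesis unfolding f_def by simp
    qed
    then show ?thesis using True by (intro tendsto_eventually) (auto simp: eventually_sequentially)
  next
    case False
    then show ?thesis unfolding f_def by simp
  qed
  have meas: "f n \<in> borel_measurable borel" for n
    using cf by (rule borel_measurable_continuous_onI)
  have conv: "(\<lambda>n. \<integral>y. f n y \<partial>M) \<longlonglongrightarrow> measure M U" if "finite_measure M" "sets M = sets borel" for M
  proof -
    interpret finite_measure M by fact
    have sp: "space M = UNIV" using that(2) by (auto dest: sets_eq_imp_space_eq)
    have "(\<lambda>n. \<integral>y. f n y \<partial>M) \<longlonglongrightarrow> (\<integral>y. indicator U y \<partial>M)"
    proof (rule integral_dominated_convergence[where w="\<lambda>_. 1"])
      have bm: "borel_measurable M = (borel_measurable borel :: ('a \<Rightarrow> real) set)"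
        by (rule measurable_cong_sets) (use that(2) in auto)
      show "(indicator U :: 'a \<Rightarrow> real) \<in> borel_measurable M" unfolding bm
        using U by (intro borel_measurable_indicator) auto
      show "f n \<in> borel_measurable M" for n unfolding bm by (rule meas)
          show "integrable M (\<lambda>_. 1::real)" by simp
      show "AE x in M. (\<lambda>n. f n x) \<longlonglongrightarrow> indicator U x" using lim by simp
      show "AE x in M. norm (f n x) \<le> 1" for n using f01[of n] by simp
    qed
    then show ?thesis using sp by simp
  qed
  have "(\<lambda>n. \<integral>y. f n y \<partial>\<mu>) \<longlonglongrightarrow> measure \<mu> U" by (rule conv) (use fm sb in auto)
  moreover have "(\<lambda>n. c * \<integral>y. f n y \<partial>\<nu>) \<longlonglongrightarrow> c * measure \<nu> U" by (intro tendsto_mult tendsto_const conv) (use fm sb in auto)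
  ultimately show ?thesis
    using H[OF cf bf] f01 by (intro LIMSEQ_le) auto
qed

lemma rect:
  fixes \<pi> :: "'a::topological_space measure" and K :: "'a \<Rightarrow> 'a measure"
  assumes K: "K \<in> borel \<rightarrow>\<^sub>M subprob_algebra borel" and sp: "sets \<pi> = sets borel"
    and A: "A \<in> sets borel" and B: "B \<in> sets borel"
  shows "emeasure (joint \<pi> K) (B \<times> A) = (\<integral>\<^sup>+x. indicator B x * emeasure (K x) A \<partial>\<pi>)"
proof -
  have spU: "space \<pi> = UNIV" using sets_eq_imp_space_eq[OF sp] by simp
  have Km: "K \<in> \<pi> \<rightarrow>\<^sub>M subprob_algebra borel" by (subst measurable_cong_sets[OF sp refl]) (rule K)
  have pm: "(\<lambda>(x, y). (x, y)) \<in> (\<pi> \<Otimes>\<^sub>M borel) \<rightarrow>\<^sub>M (borel \<Otimes>\<^sub>M borel)"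
  proof -
    have ss: "sets (\<pi> \<Otimes>\<^sub>M borel) = sets (borel \<Otimes>\<^sub>M borel)" using sp by (intro sets_pair_measure_cong) auto
    have e: "(\<lambda>(x::'a, y::'a). (x, y)) = (\<lambda>p. p)" by auto
    show ?thesis by (subst measurable_cong_sets[OF ss refl]) (simp add: e)
  qed
  have D: "(\<lambda>x. distr (K x) (borel \<Otimes>\<^sub>M borel) (Pair x)) \<in> \<pi> \<rightarrow>\<^sub>M subprob_algebra (borel \<Otimes>\<^sub>M borel)"
    by (rule measurable_distr2[where f=Pair, OF pm Km])
  have BA: "B \<times> A \<in> sets (borel \<Otimes>\<^sub>M borel)" using A B by auto
  have "emeasure (joint \<pi> K) (B \<times> A) = (\<integral>\<^sup>+x. emeasure (distr (K x) (borel \<Otimes>\<^sub>M borel) (Pair x)) (B \<times> A) \<partial>\<pi>)"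
    unfolding joint_def by (rule emeasure_bind[OF _ D BA]) (simp add: spU)
  also have "\<dots> = (\<integral>\<^sup>+x. indicator B x * emeasure (K x) A \<partial>\<pi>)"
  proof (rule nn_integral_cong)
    fix x assume "x \<in> space \<pi>"
    have sK: "sets (K x) = sets borel" using subprob_measurableD(2)[OF K] by simp
    have spK: "space (K x) = UNIV" using sets_eq_imp_space_eq[OF sK] by simp
    have mP: "Pair x \<in> K x \<rightarrow>\<^sub>M (borel \<Otimes>\<^sub>M borel)"
      by (subst measurable_cong_sets[OF sK refl]) simp
    have "emeasure (distr (K x) (borel \<Otimes>\<^sub>M borel) (Pair x)) (B \<times> A) = emeasure (K x) (Pair x -` (B \<times> A) \<inter> space (K x))"
      by (rule emeasure_distr[OF mP BA])
    also have "Pair x -` (B \<times> A) \<inter> space (K x) = (if x \<in> B then A else {})" using spK by auto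
    finally show "emeasure (distr (K x) (borel \<Otimes>\<^sub>M borel) (Pair x)) (B \<times> A) = indicator B x * emeasure (K x) A"
      by simp
  qed
  finally show ?thesis .
qed

lemma swap_rect:
  fixes J :: "('a::topological_space \<times> 'a) measure"
  assumes sJ: "sets J = sets (borel \<Otimes>\<^sub>M borel)" and A: "A \<in> sets borel" and B: "B \<in> sets borel"
  shows "emeasure (distr J (borel \<Otimes>\<^sub>M borel) prod.swap) (B \<times> A) = emeasure J (A \<times> B)"
proof -
  have spJ: "space J = UNIV" using sets_eq_imp_space_eq[OF sJ] by (simp add: space_pair_measure)
  have m: "prod.swap \<in> J \<rightarrow>\<^sub>M (borel \<Otimes>\<^sub>M borel)"
  proof -
    have e: "prod.swap = (\<lambda>(x::'a, y::'a). (y, x))" by (auto simp: fun_eq_iff)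
    show ?thesis unfolding e
      by (subst measurable_cong_sets[OF sJ refl]) (rule measurable_pair_swap')
  qed
  have "emeasure (distr J (borel \<Otimes>\<^sub>M borel) prod.swap) (B \<times> A) = emeasure J (prod.swap -` (B \<times> A) \<inter> space J)"
    using A B by (intro emeasure_distr[OF m]) auto
  also have "prod.swap -` (B \<times> A) \<inter> space J = A \<times> B" using spJ by auto
  finally show ?thesis .
qed

theorem mainTheorem3:
  fixes T :: "real set"
    and P :: "real \<Rightarrow> 'a::metric_space \<Rightarrow> 'a measure"
    and \<pi> :: "'a measure"
    and t\<^sub>2 C\<^sub>2' :: real
    and R :: "'a \<Rightarrow> 'a measure"
  assumes time: "T = range real \<or> T = {0..}"
    and semigroup: "submarkov_semigroup T P"
    and qsd: "is_QSD T P \<pi>"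
    and t2: "t\<^sub>2 \<in> T" "0 < t\<^sub>2"
    and R_kernel: "R \<in> borel \<rightarrow>\<^sub>M subprob_algebra borel"
    and reversal: "joint \<pi> (P t\<^sub>2) = distr (joint \<pi> R) (borel \<Otimes>\<^sub>M borel) prod.swap"
    and R_bound: "AE y in \<pi>. \<forall>A\<in>sets borel. measure (R y) A \<le> C\<^sub>2' * measure (R y) UNIV * measure \<pi> A"
    and support: "spt \<pi> = UNIV"
    and lsc: "lsc_kernel (P t\<^sub>2)"
  shows "\<forall>x. \<forall>A\<in>sets borel.
           measure (P t\<^sub>2 x) A \<le> (lambda_QSD P \<pi> powr t\<^sub>2 * C\<^sub>2') * measure \<pi> A"
proof -
  have sp: "sets \<pi> = sets borel" and ps: "prob_space \<pi>" using qsd unfolding is_QSD_def by auto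
  interpret prob_space \<pi> by (rule ps)
  have spU: "space \<pi> = UNIV" using sets_eq_imp_space_eq[OF sp] by simp
  have T0: "0 \<in> T" "1 \<in> T" using time by (auto intro: range_eqI[of _ _ 0] range_eqI[of _ _ 1])
  have Tadd: "s + t \<in> T" if "s \<in> T" "t \<in> T" for s t
    using time that by (auto simp flip: of_nat_add)
  have Tnn: "t \<ge> 0" if "t \<in> T" for t using time that by auto
  have Pm: "P t \<in> borel \<rightarrow>\<^sub>M subprob_algebra borel" if "t \<in> T" for t
    using semigroup that unfolding submarkov_semigroup_def by auto
  have Pm': "P t \<in> \<pi> \<rightarrow>\<^sub>M subprob_algebra borel" if "t \<in> T" for t
    by (subst measurable_cong_sets[OF sp refl]) (rule Pm[OF that])
  have Psets: "sets (P t x) = sets borel" if "t \<in> T" for t x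
    using subprob_measurableD(2)[OF Pm[OF that]] by simp
  have Psub: "subprob_space (P t x)" if "t \<in> T" for t x
    using measurable_space[OF Pm[OF that], of x] by (simp add: space_subprob_algebra)
  define a where "a t = (\<integral>x. measure (P t x) UNIV \<partial>\<pi>)" for t
  have apos: "0 < a t" if "t \<in> T" for t using qsd that unfolding is_QSD_def a_def by auto
  have qs: "(\<integral>x. measure (P t x) A \<partial>\<pi>) = a t * measure \<pi> A" if "t \<in> T" "A \<in> sets borel" for t A
  proof -
    have h: "(\<integral>x. measure (P t x) A \<partial>\<pi>) / a t = measure \<pi> A"
      using qsd that unfolding is_QSD_def a_def by blast
    have "a t \<noteq> 0" using apos[OF that(1)] by simp
    then have "(\<integral>x. measure (P t x) A \<partial>\<pi>) = measure \<pi> A * a t" using h by (simp add: divide_eq_eq)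
    then show ?thesis by (simp add: mult.commute)
  qed
  have mmeas: "(\<lambda>x. measure (P t x) A) \<in> borel_measurable \<pi>" if "t \<in> T" "A \<in> sets borel" for t A
    using measurable_compose[OF Pm'[OF that(1)] measurable_measure_subprob_algebra[OF that(2)]] .
  have emm: "emeasure (P t x) A = ennreal (measure (P t x) A)" if "t \<in> T" for t x A
    using Psub[OF that] by (simp add: subprob_space.axioms finite_measure.emeasure_eq_measure)
  have mle1: "measure (P t x) A \<le> 1" if "t \<in> T" for t x A
    using Psub[OF that] by (rule subprob_space.subprob_measure_le_1)
  have nnint: "(\<integral>\<^sup>+x. emeasure (P t x) A \<partial>\<pi>) = ennreal (a t * measure \<pi> A)" if "t \<in> T" "A \<in> sets borel" for t A
  proof -
    have "(\<integral>\<^sup>+x. emeasure (P t x) A \<partial>\<pi>) = (\<integral>\<^sup>+x. ennreal (measure (P t x) A) \<partial>\<pi>)"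
      using emm[OF that(1)] by simp
    also have "\<dots> = ennreal (\<integral>x. measure (P t x) A \<partial>\<pi>)"
    proof (rule nn_integral_eq_integral)
      show "integrable \<pi> (\<lambda>x. measure (P t x) A)"
        using mle1[OF that(1)] by (intro integrable_const_bound[where B=1] mmeas[OF that]) auto
    qed auto
    finally show ?thesis using qs[OF that] by simp
  qed
  have pU: "measure \<pi> UNIV = 1" using prob_space by (simp add: spU)
  have borel_UNIV: "UNIV \<in> sets (borel :: 'a measure)" by simp
  have ale1: "a t \<le> 1" if "t \<in> T" for t
  proof -
    have "ennreal (a t * measure \<pi> UNIV) \<le> 1"
      unfolding nnint[OF that borel_UNIV, symmetric]
      using emm[OF that] mle1[OF that] by (intro nn_integral_le_const) auto
    then show ?thesis using apos[OF that] by (simp add: pU)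
  qed

  have scale: "\<pi> \<bind> P t = scale_measure (ennreal (a t)) \<pi>" if "t \<in> T" for t
  proof (rule measure_eqI)
    show ss: "sets (\<pi> \<bind> P t) = sets (scale_measure (ennreal (a t)) \<pi>)"
      using Psets[OF that] sp by (subst sets_bind[where N=borel]) (auto simp: spU)
    fix A assume "A \<in> sets (\<pi> \<bind> P t)"
    then have A: "A \<in> sets borel" using ss sp by simp
    have "emeasure (\<pi> \<bind> P t) A = (\<integral>\<^sup>+x. emeasure (P t x) A \<partial>\<pi>)"
      by (rule emeasure_bind[OF _ Pm'[OF that] A]) (simp add: spU)
    also have "\<dots> = ennreal (a t * measure \<pi> A)" by (rule nnint[OF that A])
    also have "\<dots> = ennreal (a t) * emeasure \<pi> A"
      using apos[OF that] by (simp add: emeasure_eq_measure ennreal_mult)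
    finally show "emeasure (\<pi> \<bind> P t) A = emeasure (scale_measure (ennreal (a t)) \<pi>) A" by simp
  qed
  have amult: "a (s + t) = a s * a t" if st: "s \<in> T" "t \<in> T" for s t
  proof -
    have gm: "(\<lambda>y. emeasure (P t y) UNIV) \<in> borel_measurable borel"
      using measurable_compose[OF Pm[OF st(2)] measurable_emeasure_subprob_algebra[of UNIV borel]] by simp
    have "ennreal (a (s + t)) = ennreal (a (s + t) * measure \<pi> UNIV)" by (simp add: pU)
    also have "\<dots> = (\<integral>\<^sup>+x. emeasure (P (s + t) x) UNIV \<partial>\<pi>)"
      by (rule nnint[symmetric]) (auto intro: Tadd[OF st])
    also have "\<dots> = (\<integral>\<^sup>+x. emeasure (P s x \<bind> P t) UNIV \<partial>\<pi>)"
      using semigroup st unfolding submarkov_semigroup_def by simp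
    also have "\<dots> = (\<integral>\<^sup>+x. \<integral>\<^sup>+y. emeasure (P t y) UNIV \<partial>P s x \<partial>\<pi>)"
    proof (rule nn_integral_cong)
      fix x
      have "space (P s x) \<noteq> {}" using sets_eq_imp_space_eq[OF Psets[OF st(1), of x]] by simp
      moreover have "P t \<in> P s x \<rightarrow>\<^sub>M subprob_algebra borel"
        by (subst measurable_cong_sets[OF Psets[OF st(1)] refl]) (rule Pm[OF st(2)])
      ultimately show "emeasure (P s x \<bind> P t) UNIV = (\<integral>\<^sup>+y. emeasure (P t y) UNIV \<partial>P s x)"
        by (intro emeasure_bind) auto
    qed
    also have "\<dots> = (\<integral>\<^sup>+y. emeasure (P t y) UNIV \<partial>(\<pi> \<bind> P s))"
      by (rule nn_integral_bind[OF gm Pm'[OF st(1)], symmetric])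
    also have "\<dots> = ennreal (a s) * (\<integral>\<^sup>+y. emeasure (P t y) UNIV \<partial>\<pi>)"
      unfolding scale[OF st(1)]
      by (rule nn_integral_scale_measure) (subst measurable_cong_sets[OF sp refl]; rule gm)
    also have "\<dots> = ennreal (a s) * ennreal (a t)"
      using nnint[OF st(2), of UNIV] by (simp add: pU)
    also have "\<dots> = ennreal (a s * a t)" using apos[OF st(1)] apos[OF st(2)] by (simp add: ennreal_mult)
    finally show ?thesis using apos st Tadd[OF st] by (simp add: less_imp_le mult_nonneg_nonneg)
  qed
  have lam: "a t\<^sub>2 = lambda_QSD P \<pi> powr t\<^sub>2"
  proof -
    have l1: "lambda_QSD P \<pi> = a 1" unfolding lambda_QSD_def a_def ..
    from time show ?thesis
    proof
      assume Tr: "T = range real"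
      then obtain n where n: "t\<^sub>2 = real n" using t2 by auto
      have "a (real k) = a 1 ^ k" for k
      proof (induction k)
        case 0
        have "a 0 = a 0 * a 0" using amult[OF T0(1) T0(1)] by simp
        then show ?case using apos[OF T0(1)] by simp
      next
        case (Suc k)
        have "a (real (Suc k)) = a (real k + 1)" by (simp add: add.commute)
        also have "\<dots> = a (real k) * a 1" using Tr by (intro amult) (auto intro: range_eqI[of _ _ 1])
        finally show ?case using Suc by simp
      qed
      then show ?thesis using n l1 apos[OF T0(2)] by (simp add: powr_realpow)
    next
      assume Tc: "T = {0..}"
      show ?thesis unfolding l1 using t2 Tc apos ale1 amult
        by (intro mult_fun_powr) auto
    qed
  qed

  have sJ: "sets (joint \<pi> R) = sets (borel \<Otimes>\<^sub>M borel)"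
    unfolding joint_def by (subst sets_bind[where N="borel \<Otimes>\<^sub>M borel"]) (auto simp: spU)
  have Rsets: "sets (R y) = sets borel" for y
    using subprob_measurableD(2)[OF R_kernel] by simp
  have Rsub: "subprob_space (R y)" for y
    using measurable_space[OF R_kernel, of y] by (simp add: space_subprob_algebra)
  have emR: "emeasure (R y) A = ennreal (measure (R y) A)" for y A
    using Rsub by (simp add: subprob_space.axioms finite_measure.emeasure_eq_measure)
  have Rm': "R \<in> \<pi> \<rightarrow>\<^sub>M subprob_algebra borel"
    by (subst measurable_cong_sets[OF sp refl]) (rule R_kernel)
  have rect_eq: "(\<integral>\<^sup>+x. indicator B x * emeasure (P t\<^sub>2 x) A \<partial>\<pi>) = (\<integral>\<^sup>+y. indicator A y * emeasure (R y) B \<partial>\<pi>)"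
    if A: "A \<in> sets borel" and B: "B \<in> sets borel" for A B
  proof -
    have "(\<integral>\<^sup>+x. indicator B x * emeasure (P t\<^sub>2 x) A \<partial>\<pi>) = emeasure (joint \<pi> (P t\<^sub>2)) (B \<times> A)"
      by (rule rect[OF Pm[OF t2(1)] sp A B, symmetric])
    also have "\<dots> = emeasure (joint \<pi> R) (A \<times> B)"
      unfolding reversal by (rule swap_rect[OF sJ A B])
    also have "\<dots> = (\<integral>\<^sup>+y. indicator A y * emeasure (R y) B \<partial>\<pi>)"
      by (rule rect[OF R_kernel sp B A])
    finally show ?thesis .
  qed
  have RU: "(\<integral>\<^sup>+y. indicator A y * emeasure (R y) UNIV \<partial>\<pi>) = ennreal (a t\<^sub>2 * measure \<pi> A)"
    if A: "A \<in> sets borel" for A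
    using rect_eq[OF A borel_UNIV, symmetric] nnint[OF t2(1) A] by simp
  have Cnn: "C\<^sub>2' \<ge> 0"
  proof (rule ccontr)
    assume "\<not> C\<^sub>2' \<ge> 0"
    then have neg: "C\<^sub>2' < 0" by simp
    have "AE y in \<pi>. measure (R y) UNIV \<le> C\<^sub>2' * measure (R y) UNIV * measure \<pi> UNIV"
      using R_bound
    proof eventually_elim
      case (elim y)
      then show ?case using borel_UNIV by blast
    qed
    then have "AE y in \<pi>. indicator UNIV y * emeasure (R y) UNIV = 0"
    proof eventually_elim
      case (elim y)
      have m0: "measure (R y) UNIV \<ge> 0" by simp
      have "measure (R y) UNIV \<le> 0"
      proof (rule ccontr)
        assume "\<not> measure (R y) UNIV \<le> 0"
        then have "C\<^sub>2' * measure (R y) UNIV < 0" using neg by (simp add: mult_neg_pos)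
        then show False using elim pU m0 by simp
      qed
      then show ?case using m0 emR[of y UNIV] by simp
    qed
    then have "(\<integral>\<^sup>+y. indicator UNIV y * emeasure (R y) UNIV \<partial>\<pi>) = (\<integral>\<^sup>+y. 0 \<partial>\<pi>)"
      by (rule nn_integral_cong_AE)
    then have "ennreal (a t\<^sub>2 * measure \<pi> UNIV) = 0" using RU[OF borel_UNIV] by simp
    then show False using apos[OF t2(1)] pU by simp
  qed
  define c where "c = a t\<^sub>2 * C\<^sub>2'"
  have cnn: "c \<ge> 0" unfolding c_def using apos[OF t2(1)] Cnn by simp
  have key: "(\<integral>\<^sup>+x. indicator B x * emeasure (P t\<^sub>2 x) A \<partial>\<pi>) \<le> ennreal (c * measure \<pi> B) * emeasure \<pi> A"
    if A: "A \<in> sets borel" and B: "B \<in> sets borel" for A B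
  proof -
    have mR: "(\<lambda>y. indicator A y * emeasure (R y) UNIV) \<in> borel_measurable \<pi>"
    proof -
      have m1: "(\<lambda>y. emeasure (R y) UNIV) \<in> borel_measurable \<pi>"
        using measurable_compose[OF Rm' measurable_emeasure_subprob_algebra[OF borel_UNIV]] .
      have m2: "(indicator A :: 'a \<Rightarrow> ennreal) \<in> borel_measurable \<pi>"
        using A sp by (intro borel_measurable_indicator) simp
      show ?thesis by (rule borel_measurable_times_ennreal[OF m2 m1])
    qed
    have "(\<integral>\<^sup>+x. indicator B x * emeasure (P t\<^sub>2 x) A \<partial>\<pi>) = (\<integral>\<^sup>+y. indicator A y * emeasure (R y) B \<partial>\<pi>)"
      by (rule rect_eq[OF A B])
    also have "\<dots> \<le> (\<integral>\<^sup>+y. ennreal (C\<^sub>2' * measure \<pi> B) * (indicator A y * emeasure (R y) UNIV) \<partial>\<pi>)"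
    proof (rule nn_integral_mono_AE)
      show "AE y in \<pi>. indicator A y * emeasure (R y) B \<le> ennreal (C\<^sub>2' * measure \<pi> B) * (indicator A y * emeasure (R y) UNIV)"
        using R_bound
      proof eventually_elim
        case (elim y)
        have "measure (R y) B \<le> C\<^sub>2' * measure (R y) UNIV * measure \<pi> B" using elim B by blast
        then have "measure (R y) B \<le> C\<^sub>2' * measure \<pi> B * measure (R y) UNIV"
          by (simp add: ac_simps)
        then have "ennreal (measure (R y) B) \<le> ennreal (C\<^sub>2' * measure \<pi> B * measure (R y) UNIV)"
          by (rule ennreal_leI)
        also have "\<dots> = ennreal (C\<^sub>2' * measure \<pi> B) * emeasure (R y) UNIV"
          using Cnn by (simp add: emR ennreal_mult)
        finally have "emeasure (R y) B \<le> ennreal (C\<^sub>2' * measure \<pi> B) * emeasure (R y) UNIV"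
          by (simp add: emR)
        then show ?case by (cases "y \<in> A") auto
      qed
    qed
    also have "\<dots> = ennreal (C\<^sub>2' * measure \<pi> B) * (\<integral>\<^sup>+y. indicator A y * emeasure (R y) UNIV \<partial>\<pi>)"
      by (rule nn_integral_cmult[OF mR])
    also have "\<dots> = ennreal (C\<^sub>2' * measure \<pi> B) * ennreal (a t\<^sub>2 * measure \<pi> A)"
      by (simp add: RU[OF A])
    also have "\<dots> = ennreal (c * measure \<pi> B) * emeasure \<pi> A"
      using Cnn apos[OF t2(1)]
      by (simp add: c_def emeasure_eq_measure ennreal_mult[symmetric] ac_simps)
    finally show ?thesis .
  qed

  have Pfin: "finite_measure (P t\<^sub>2 x)" for x
    using Psub[OF t2(1)] by (simp add: subprob_space.axioms)
  have cont: "(\<integral>y. f y \<partial>P t\<^sub>2 x) \<le> c * (\<integral>y. f y \<partial>\<pi>)"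
    if cf: "continuous_on UNIV f" and bf: "bounded (range f)" and fnn: "\<forall>x. 0 \<le> f x" for f :: "'a \<Rightarrow> real" and x
  proof -
    define g where "g x = (\<integral>y. f y \<partial>P t\<^sub>2 x)" for x
    define K where "K = (\<integral>y. f y \<partial>\<pi>)"
    have fm: "f \<in> borel_measurable borel" using cf by (rule borel_measurable_continuous_onI)
    have fmP: "f \<in> borel_measurable (P t\<^sub>2 x)" for x
      by (subst measurable_cong_sets[OF Psets[OF t2(1)] refl]) (rule fm)
    have fmpi: "f \<in> borel_measurable \<pi>"
      by (subst measurable_cong_sets[OF sp refl]) (rule fm)
    obtain M0 where M0: "\<And>y. norm (f y) \<le> M0" using bf unfolding bounded_iff by auto
    have intP: "(\<integral>\<^sup>+y. ennreal (f y) \<partial>P t\<^sub>2 x) = ennreal (g x)" for x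
    proof -
      interpret fx: finite_measure "P t\<^sub>2 x" by (rule Pfin)
      show ?thesis unfolding g_def
        using M0 fnn by (intro nn_integral_eq_integral fx.integrable_const_bound[where B=M0] fmP) auto
    qed
    have intpi: "(\<integral>\<^sup>+y. ennreal (f y) \<partial>\<pi>) = ennreal K"
      unfolding K_def using M0 fnn by (intro nn_integral_eq_integral integrable_const_bound[where B=M0] fmpi) auto
    have Knn: "K \<ge> 0" unfolding K_def using fnn by (simp add: integral_nonneg)
    have gnn: "g x \<ge> 0" for x unfolding g_def using fnn by (simp add: integral_nonneg)
    have fen: "(\<lambda>y. ennreal (f y)) \<in> borel_measurable borel" using fm by simp
    have gmeas: "(\<lambda>x. \<integral>\<^sup>+y. ennreal (f y) \<partial>P t\<^sub>2 x) \<in> borel_measurable \<pi>"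
      using measurable_compose[OF Pm'[OF t2(1)] nn_integral_measurable_subprob_algebra[OF fen]] .
    have ineqB: "(\<integral>\<^sup>+x. indicator B x * ennreal (g x) \<partial>\<pi>) \<le> ennreal (c * measure \<pi> B) * ennreal K"
      if B: "B \<in> sets borel" for B
    proof -
      define D where "D = density \<pi> (indicator B)"
      have sD: "sets D = sets borel" unfolding D_def using sp by simp
      have spD: "space D = UNIV" using sets_eq_imp_space_eq[OF sD] by simp
      have indm: "(indicator B :: 'a \<Rightarrow> ennreal) \<in> borel_measurable \<pi>"
        using B sp by (intro borel_measurable_indicator) simp
      have PmD: "P t\<^sub>2 \<in> D \<rightarrow>\<^sub>M subprob_algebra borel"
        by (subst measurable_cong_sets[OF sD refl]) (rule Pm[OF t2(1)])
      have sbind: "sets (D \<bind> P t\<^sub>2) = sets borel"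
        using Psets[OF t2(1)] by (subst sets_bind[where N=borel]) (auto simp: spD)
      have le: "D \<bind> P t\<^sub>2 \<le> scale_measure (ennreal (c * measure \<pi> B)) \<pi>"
      proof (subst le_measure)
        show "sets (D \<bind> P t\<^sub>2) = sets (scale_measure (ennreal (c * measure \<pi> B)) \<pi>)" using sbind sp by simp
        show "\<forall>A\<in>sets (D \<bind> P t\<^sub>2). emeasure (D \<bind> P t\<^sub>2) A \<le> emeasure (scale_measure (ennreal (c * measure \<pi> B)) \<pi>) A"
        proof
          fix A assume "A \<in> sets (D \<bind> P t\<^sub>2)"
          then have A: "A \<in> sets borel" using sbind by simp
          have "emeasure (D \<bind> P t\<^sub>2) A = (\<integral>\<^sup>+x. emeasure (P t\<^sub>2 x) A \<partial>D)"
            by (rule emeasure_bind[OF _ PmD A]) (simp add: spD)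
          also have "\<dots> = (\<integral>\<^sup>+x. indicator B x * emeasure (P t\<^sub>2 x) A \<partial>\<pi>)"
            unfolding D_def
            by (rule nn_integral_density[OF indm measurable_compose[OF Pm'[OF t2(1)] measurable_emeasure_subprob_algebra[OF A]]])
          also have "\<dots> \<le> ennreal (c * measure \<pi> B) * emeasure \<pi> A" by (rule key[OF A B])
          finally show "emeasure (D \<bind> P t\<^sub>2) A \<le> emeasure (scale_measure (ennreal (c * measure \<pi> B)) \<pi>) A" by simp
        qed
      qed
      have "(\<integral>\<^sup>+x. indicator B x * ennreal (g x) \<partial>\<pi>) = (\<integral>\<^sup>+x. indicator B x * (\<integral>\<^sup>+y. ennreal (f y) \<partial>P t\<^sub>2 x) \<partial>\<pi>)"
        by (simp add: intP)
      also have "\<dots> = (\<integral>\<^sup>+x. (\<integral>\<^sup>+y. ennreal (f y) \<partial>P t\<^sub>2 x) \<partial>D)"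
        unfolding D_def by (rule nn_integral_density[OF indm gmeas, symmetric])
      also have "\<dots> = (\<integral>\<^sup>+y. ennreal (f y) \<partial>(D \<bind> P t\<^sub>2))"
        by (rule nn_integral_bind[OF fen PmD, symmetric])
      also have "\<dots> \<le> (\<integral>\<^sup>+y. ennreal (f y) \<partial>scale_measure (ennreal (c * measure \<pi> B)) \<pi>)"
        by (rule nn_integral_mono_measure[OF _ le]) (simp add: sbind sp)
      also have "\<dots> = ennreal (c * measure \<pi> B) * (\<integral>\<^sup>+y. ennreal (f y) \<partial>\<pi>)"
        by (rule nn_integral_scale_measure) (rule measurable_compose[OF fmpi measurable_ennreal])
      also have "\<dots> = ennreal (c * measure \<pi> B) * ennreal K" by (simp add: intpi)
      finally show ?thesis .
    qed
    show ?thesis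
    proof (rule ccontr)
      assume "\<not> ?thesis"
      then have gt: "c * K < g x" unfolding g_def K_def by simp
      define e where "e = (g x - c * K) / 2"
      have e: "e > 0" unfolding e_def using gt by simp
      define B where "B = {z. c * K + e < g z}"
      have "lsc_fun g" using lsc cf bf fnn unfolding lsc_kernel_def g_def by blast
      then have oB: "open B" unfolding B_def lsc_fun_def by blast
      then have Bb: "B \<in> sets borel" by simp
      have xB: "x \<in> B" unfolding B_def e_def using gt by (simp add: field_simps)
      have pos: "0 < emeasure \<pi> B" using support oB xB unfolding spt_def by blast
      have "(\<integral>\<^sup>+z. ennreal (c * K + e) * indicator B z \<partial>\<pi>) \<le> (\<integral>\<^sup>+z. indicator B z * ennreal (g z) \<partial>\<pi>)"
        by (rule nn_integral_mono) (auto simp: B_def indicator_def intro: ennreal_leI less_imp_le)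
      also have "\<dots> \<le> ennreal (c * measure \<pi> B) * ennreal K" by (rule ineqB[OF Bb])
      finally have "ennreal (c * K + e) * emeasure \<pi> B \<le> ennreal (c * measure \<pi> B) * ennreal K"
        using Bb sp by (simp add: nn_integral_cmult_indicator)
      moreover have h1: "0 \<le> c * K + e" using cnn Knn e by simp
      moreover have h2: "0 \<le> c * measure \<pi> B" using cnn by simp
      ultimately have "ennreal ((c * K + e) * measure \<pi> B) \<le> ennreal (c * measure \<pi> B * K)"
        by (simp only: emeasure_eq_measure ennreal_mult[OF h1 measure_nonneg] ennreal_mult[OF h2 Knn])
      moreover have "0 \<le> c * measure \<pi> B * K" using h2 Knn by simp
      ultimately have "(c * K + e) * measure \<pi> B \<le> c * measure \<pi> B * K"
        using ennreal_le_iff by blast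
      moreover have "measure \<pi> B > 0" using pos by (simp add: emeasure_eq_measure)
      ultimately have "e * measure \<pi> B \<le> 0" by (simp add: algebra_simps)
      then show False using e \<open>measure \<pi> B > 0\<close> by (simp add: mult_le_0_iff)
    qed
  qed

  have openU: "measure (P t\<^sub>2 x) U \<le> c * measure \<pi> U" if U: "open U" for x U
    by (rule open_from_cont[OF Pfin finite_measure_axioms Psets[OF t2(1)] sp cont U])
  have final: "measure (P t\<^sub>2 x) A \<le> c * measure \<pi> A" if A: "A \<in> sets borel" for x A
  proof (rule field_le_epsilon)
    fix e :: real assume e: "0 < e"
    have e': "e / (c + 1) > 0" using e cnn by simp
    obtain U where U: "open U" "A \<subseteq> U" "measure \<pi> U \<le> measure \<pi> A + e / (c + 1)"
      using outer_reg[OF finite_measure_axioms sp A e'] by blast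
    interpret fx: finite_measure "P t\<^sub>2 x" by (rule Pfin)
    have "measure (P t\<^sub>2 x) A \<le> measure (P t\<^sub>2 x) U"
      using U Psets[OF t2(1), of x] by (intro fx.finite_measure_mono) auto
    also have "\<dots> \<le> c * measure \<pi> U" by (rule openU[OF U(1)])
    also have "\<dots> \<le> c * (measure \<pi> A + e / (c + 1))" using U(3) cnn by (intro mult_left_mono) auto
    also have "\<dots> = c * measure \<pi> A + c * (e / (c + 1))" by (simp add: algebra_simps)
    also have "c * (e / (c + 1)) \<le> e"
    proof -
      have "c * (e / (c + 1)) = e * (c / (c + 1))" by simp
      also have "\<dots> \<le> e * 1" using e cnn by (intro mult_left_mono) auto
      finally show ?thesis by simp
    qed
    finally show "measure (P t\<^sub>2 x) A \<le> c * measure \<pi> A + e" by simp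
  qed
  show ?thesis using final unfolding c_def lam by blast
qed

end
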